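(* Let $\Pi$ be a matroid secretary problem on a fixed finite matroid, whose instances are assignments of positive weights to the matroid elements. There is a bijection $B$ between probability distributions with finite support over instances of $\Pi$ such that, for every such $D$ and every $r$, there exists an algorithm with type 2 performance guarantee $r$ on $D$ if and only if there exists an algorithm with type 3 performance guarantee $r$ on $B(D)$.
   Context: In the matroid secretary problem the elements of a matroid arrive in uniformly random order revealing their weights; the algorithm must irrevocably accept or reject each on arrival, keeping the accepted set independent. For an instance $I$, $a(I)$ is the set accepted by algorithm $a$, $opt(I)$ a maximum-weight independent set, and $w(X)$ the total weight of $X$. Algorithm $a$ has type 2 performance guarantee $r$ on a distribution $D$ if $\mathbb{E}_{I\sim D}[w(a(I))/w(opt(I))]\ge r$, and type 3 performance guarantee $r$ on $D$ if $\mathbb{E}_{I\sim D}[w(a(I))]\ge r\cdot\mathbb{E}_{I\sim D}[w(opt(I))]$; the expectations of $w(a(I))$ are also over the random arrival order and the algorithm's randomness. *)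

theory Defs
  imports "HOL-Probability.Probability" "HOL-Combinatorics.Multiset_Permutations"
begin

definition matroid :: "('a::finite set \<Rightarrow> bool) \<Rightarrow> bool" where
  "matroid indep \<longleftrightarrow>
     indep {} \<and>
     (\<forall>A B. indep B \<and> A \<subseteq> B \<longrightarrow> indep A) \<and>
     (\<forall>A B. indep A \<and> indep B \<and> card A < card B \<longrightarrow>
        (\<exists>x\<in>B - A. indep (insert x A)))"

definition instance_w :: "('a::finite \<Rightarrow> real) \<Rightarrow> bool" where
  "instance_w w \<longleftrightarrow> (\<forall>e. w e > 0)"

definition fin_dists :: "('a::finite \<Rightarrow> real) pmf set" where
  "fin_dists = {D. finite (set_pmf D) \<and> (\<forall>w\<in>set_pmf D. instance_w w)}"

text \<open>An (online, possibly randomized) algorithm: given the history of arrived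
  elements (element, revealed weight, whether it was accepted) and the currently
  arriving element with its weight, it returns a distribution over the decision
  (accept = True). An acceptance is only executed if the accepted set stays
  independent, so every run yields an independent set.\<close>
type_synonym 'a algorithm = "('a \<times> real \<times> bool) list \<Rightarrow> 'a \<Rightarrow> real \<Rightarrow> bool pmf"

fun run :: "('a set \<Rightarrow> bool) \<Rightarrow> 'a algorithm \<Rightarrow> ('a \<Rightarrow> real) \<Rightarrow> 'a list
             \<Rightarrow> ('a \<times> real \<times> bool) list \<Rightarrow> 'a set \<Rightarrow> 'a set pmf" where
  "run indep A w [] hist acc = return_pmf acc"
| "run indep A w (x # xs) hist acc =
     bind_pmf (A hist x (w x)) (\<lambda>b.
       let ok = (b \<and> indep (insert x acc)) in
       run indep A w xs (hist @ [(x, w x, ok)]) (if ok then insert x acc else acc))"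

definition alg_out :: "('a::finite set \<Rightarrow> bool) \<Rightarrow> 'a algorithm \<Rightarrow> ('a \<Rightarrow> real) \<Rightarrow> 'a set pmf" where
  "alg_out indep A w =
     bind_pmf (pmf_of_set (permutations_of_set UNIV)) (\<lambda>xs. run indep A w xs [] {})"

definition alg_weight :: "('a::finite set \<Rightarrow> bool) \<Rightarrow> 'a algorithm \<Rightarrow> ('a \<Rightarrow> real) \<Rightarrow> real" where
  "alg_weight indep A w = measure_pmf.expectation (alg_out indep A w) (\<lambda>S. sum w S)"

definition opt_weight :: "('a::finite set \<Rightarrow> bool) \<Rightarrow> ('a \<Rightarrow> real) \<Rightarrow> real" where
  "opt_weight indep w = Max ((\<lambda>S. sum w S) ` {S. indep S})"

definition type2 :: "('a::finite set \<Rightarrow> bool) \<Rightarrow> 'a algorithm \<Rightarrow> ('a \<Rightarrow> real) pmf \<Rightarrow> real \<Rightarrow> bool" where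
  "type2 indep A D r \<longleftrightarrow>
     measure_pmf.expectation D (\<lambda>w. alg_weight indep A w / opt_weight indep w) \<ge> r"

definition type3 :: "('a::finite set \<Rightarrow> bool) \<Rightarrow> 'a algorithm \<Rightarrow> ('a \<Rightarrow> real) pmf \<Rightarrow> real \<Rightarrow> bool" where
  "type3 indep A D r \<longleftrightarrow>
     measure_pmf.expectation D (\<lambda>w. alg_weight indep A w)
       \<ge> r * measure_pmf.expectation D (\<lambda>w. opt_weight indep w)"

end

theory Submission
  imports Defs
begin

definition Zw :: "('b \<Rightarrow> real) \<Rightarrow> 'b pmf \<Rightarrow> real" where
  "Zw g D = (\<Sum>y\<in>set_pmf D. pmf D y * g y)"

definition rw :: "('b \<Rightarrow> real) \<Rightarrow> 'b pmf \<Rightarrow> 'b pmf" where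
  "rw g D = embed_pmf (\<lambda>x. pmf D x * g x / Zw g D)"

lemma Zw_pos:
  assumes "finite (set_pmf D)" "\<forall>x\<in>set_pmf D. g x > 0"
  shows "Zw g D > 0"
  unfolding Zw_def using assms set_pmf_not_empty[of D]
  by (intro sum_pos) (auto simp: pmf_positive)

lemma pmf_rw:
  assumes "finite (set_pmf D)" "\<forall>x\<in>set_pmf D. g x > 0"
  shows "pmf (rw g D) x = pmf D x * g x / Zw g D"
proof -
  have Z: "Zw g D > 0" using Zw_pos[OF assms] .
  have nn: "\<And>x. 0 \<le> pmf D x * g x / Zw g D"
  proof -
    fix x show "0 \<le> pmf D x * g x / Zw g D"
      using Z assms(2) by (cases "x \<in> set_pmf D") (auto simp: set_pmf_iff less_imp_le)
  qed
  have "(\<integral>\<^sup>+x. ennreal (pmf D x * g x / Zw g D) \<partial>count_space UNIV)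
        = (\<Sum>x\<in>set_pmf D. ennreal (pmf D x * g x / Zw g D))"
    using assms(1) by (intro nn_integral_count_space') (auto simp: set_pmf_iff)
  also have "\<dots> = ennreal (\<Sum>x\<in>set_pmf D. pmf D x * g x / Zw g D)"
    using nn by (intro sum_ennreal) auto
  also have "(\<Sum>x\<in>set_pmf D. pmf D x * g x / Zw g D) = Zw g D / Zw g D"
    by (simp only: Zw_def sum_divide_distrib)
  also have "\<dots> = 1" using Z by simp
  finally have "(\<integral>\<^sup>+x. ennreal (pmf D x * g x / Zw g D) \<partial>count_space UNIV) = 1" by simp
  then show ?thesis unfolding rw_def by (subst pmf_embed_pmf) (use nn in auto)
qed

lemma set_rw:
  assumes "finite (set_pmf D)" "\<forall>x\<in>set_pmf D. g x > 0"
  shows "set_pmf (rw g D) = set_pmf D"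
proof -
  have Z: "Zw g D > 0" using Zw_pos[OF assms] .
  show ?thesis
  proof (intro set_eqI iffI)
    fix x assume "x \<in> set_pmf (rw g D)"
    then show "x \<in> set_pmf D" by (auto simp: set_pmf_iff pmf_rw[OF assms])
  next
    fix x assume x: "x \<in> set_pmf D"
    then have "g x > 0" "pmf D x > 0" using assms by (auto simp: pmf_positive)
    then show "x \<in> set_pmf (rw g D)" using Z by (simp add: set_pmf_iff pmf_rw[OF assms])
  qed
qed

lemma exp_rw:
  assumes "finite (set_pmf D)" "\<forall>x\<in>set_pmf D. g x > 0"
  shows "measure_pmf.expectation (rw g D) f = (\<Sum>x\<in>set_pmf D. pmf D x * g x * f x) / Zw g D"
proof -
  have "measure_pmf.expectation (rw g D) f = (\<Sum>x\<in>set_pmf D. f x * pmf (rw g D) x)"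
    using assms by (intro integral_measure_pmf_real) (auto simp: set_rw)
  also have "\<dots> = (\<Sum>x\<in>set_pmf D. pmf D x * g x * f x) / Zw g D"
    using assms by (simp add: pmf_rw sum_divide_distrib algebra_simps)
  finally show ?thesis .
qed

lemma exp_D:
  assumes "finite (set_pmf D)"
  shows "measure_pmf.expectation D f = (\<Sum>x\<in>set_pmf D. pmf D x * f x)"
  using assms by (subst integral_measure_pmf_real[where A="set_pmf D"]) (auto simp: mult.commute)

lemma rw_rw:
  assumes "finite (set_pmf D)" "\<forall>x\<in>set_pmf D. g x > 0"
  shows "rw (\<lambda>x. 1 / g x) (rw g D) = D"
proof (rule pmf_eqI)
  fix x
  have g2: "\<forall>x\<in>set_pmf (rw g D). 1 / g x > 0" using assms by (simp add: set_rw)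
  have f2: "finite (set_pmf (rw g D))" using assms by (simp add: set_rw)
  have Z: "Zw g D > 0" using Zw_pos[OF assms] .
  have "Zw (\<lambda>x. 1 / g x) (rw g D) = (\<Sum>y\<in>set_pmf D. pmf D y / Zw g D)"
  proof -
    have "Zw (\<lambda>x. 1 / g x) (rw g D) = (\<Sum>y\<in>set_pmf D. pmf (rw g D) y * (1 / g y))"
      by (simp add: Zw_def set_rw[OF assms])
    also have "\<dots> = (\<Sum>y\<in>set_pmf D. pmf D y / Zw g D)"
    proof (rule sum.cong)
      fix y assume "y \<in> set_pmf D"
      then have "g y > 0" using assms by auto
      then show "pmf (rw g D) y * (1 / g y) = pmf D y / Zw g D"
        by (simp add: pmf_rw[OF assms])
    qed simp
    finally show ?thesis .
  qed
  also have "\<dots> = 1 / Zw g D"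
    using assms by (simp add: sum_divide_distrib[symmetric] sum_pmf_eq_1)
  finally have Z2: "Zw (\<lambda>x. 1 / g x) (rw g D) = 1 / Zw g D" .
  show "pmf (rw (\<lambda>x. 1 / g x) (rw g D)) x = pmf D x"
  proof (cases "x \<in> set_pmf D")
    case True
    then have "g x > 0" using assms by auto
    then show ?thesis using Z
      by (simp add: pmf_rw[OF f2 g2] pmf_rw[OF assms] Z2)
  next
    case False
    then show ?thesis using assms
      by (simp add: pmf_rw[OF f2 g2] pmf_rw[OF assms] set_pmf_iff)
  qed
qed

lemma opt_pos:
  assumes "instance_w w" "indep {e}"
  shows "opt_weight indep w > 0"
proof -
  have "sum w {e} \<le> opt_weight indep w"
    unfolding opt_weight_def using assms(2) by (intro Max_ge) (auto intro!: rev_image_eqI[of "{e}"])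
  moreover have "w e > 0" using assms(1) by (simp add: instance_w_def)
  ultimately show ?thesis by simp
qed

theorem lemma5p9:
  fixes indep :: "'a::finite set \<Rightarrow> bool"
  assumes "matroid indep"
    and "\<exists>e. indep {e}"
  shows "\<exists>B. bij_betw B fin_dists fin_dists \<and>
           (\<forall>D\<in>fin_dists. \<forall>r::real.
              (\<exists>A. type2 indep A D r) \<longleftrightarrow> (\<exists>A. type3 indep A (B D) r))"
proof -
  obtain e where e: "indep {e}" using assms(2) by blast
  define g where "g = (\<lambda>w. 1 / opt_weight indep w)"
  define h where "h = (\<lambda>w. opt_weight indep w)"
  have opos: "\<And>D. D \<in> fin_dists \<Longrightarrow> \<forall>w\<in>set_pmf D. opt_weight indep w > 0"
    using opt_pos e by (auto simp: fin_dists_def)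
  have gpos: "\<And>D. D \<in> fin_dists \<Longrightarrow> \<forall>w\<in>set_pmf D. g w > 0"
    using opos by (auto simp: g_def)
  have hpos: "\<And>D. D \<in> fin_dists \<Longrightarrow> \<forall>w\<in>set_pmf D. h w > 0"
    using opos by (auto simp: h_def)
  have fin: "\<And>D. D \<in> fin_dists \<Longrightarrow> finite (set_pmf D)" by (auto simp: fin_dists_def)
  have gin: "\<And>D. D \<in> fin_dists \<Longrightarrow> rw g D \<in> fin_dists"
    using fin gpos by (simp add: set_rw fin_dists_def)
  have hin: "\<And>D. D \<in> fin_dists \<Longrightarrow> rw h D \<in> fin_dists"
    using fin hpos by (simp add: set_rw fin_dists_def)
  have bij: "bij_betw (rw g) fin_dists fin_dists"
  proof (rule bij_betw_byWitness[where f'="rw h"])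
    show "\<forall>a\<in>fin_dists. rw h (rw g a) = a"
    proof
      fix D :: "('a\<Rightarrow>real) pmf" assume D: "D \<in> fin_dists"
      have "rw h (rw g D) = rw (\<lambda>x::'a\<Rightarrow>real. 1 / g x) (rw g D)" by (simp add: g_def h_def)
      then show "rw h (rw g D) = D" using rw_rw[OF fin[OF D] gpos[OF D]] by simp
    qed
    show "\<forall>a'\<in>fin_dists. rw g (rw h a') = a'"
    proof
      fix D :: "('a\<Rightarrow>real) pmf" assume D: "D \<in> fin_dists"
      have "rw g (rw h D) = rw (\<lambda>x::'a\<Rightarrow>real. 1 / h x) (rw h D)" by (simp add: g_def h_def)
      then show "rw g (rw h D) = D" using rw_rw[OF fin[OF D] hpos[OF D]] by simp
    qed
    show "rw g ` fin_dists \<subseteq> fin_dists" using gin by auto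
    show "rw h ` fin_dists \<subseteq> fin_dists" using hin by auto
  qed
  have eq: "type2 indep A D r \<longleftrightarrow> type3 indep A (rw g D) r" if D: "D \<in> fin_dists" for A and D :: "('a\<Rightarrow>real) pmf" and r
  proof -
    have Z: "Zw g D > 0" using Zw_pos[OF fin[OF D] gpos[OF D]] .
    have e1: "measure_pmf.expectation (rw g D) (alg_weight indep A)
       = measure_pmf.expectation D (\<lambda>w. alg_weight indep A w / opt_weight indep w) / Zw g D"
      using fin[OF D] gpos[OF D]
      by (simp add: exp_rw exp_D g_def)
    have "measure_pmf.expectation (rw g D) (opt_weight indep)
        = (\<Sum>x\<in>set_pmf D. pmf D x) / Zw g D"
      unfolding exp_rw[OF fin[OF D] gpos[OF D]]
      using opos[OF D] by (intro arg_cong2[where f="(/)"] sum.cong) (auto simp: g_def)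
    also have "\<dots> = 1 / Zw g D" by (simp add: sum_pmf_eq_1 fin[OF D])
    finally have e2: "measure_pmf.expectation (rw g D) (opt_weight indep) = 1 / Zw g D" .
    show ?thesis unfolding type2_def type3_def
      using e1 e2 Z by (simp add: divide_le_cancel divide_right_mono)
  qed
  show ?thesis
    by (rule exI[of _ "rw g"]) (use bij eq in blast)
qed

end
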